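(* Let $n>0$ be an integer such that $\lambda_n:=4\cdot5^n-1$ is prime, let $h\in\mathbb{F}_{\lambda_n}$ be nonzero, let $\mathcal{H}/\mathbb{F}_{\lambda_n}$ be the hyperelliptic curve $y^2=x^5+h$, and let $\mathcal{J}$ be its Jacobian. Then $\mathcal{J}[2](\mathbb{F}_{\lambda_n})\cong\mathbb{Z}/(2)\times\mathbb{Z}/(2)$.
   Context: $\mathcal{J}[2](\mathbb{F}_{\lambda_n})$ denotes the group of $\mathbb{F}_{\lambda_n}$-rational points of $\mathcal{J}$ killed by $2$. *)

theory Defs
  imports "HOL-Computational_Algebra.Computational_Algebra" "HOL-Algebra.Elementary_Groups"
begin

text \<open>Jacobian of the genus-2 imaginary hyperelliptic curve y^2 = f(x), f monic squarefree of
degree 5, over a field K of characteristic not 2, in Mumford representation: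
K-rational points of the Jacobian are the reduced pairs (u,v) of polynomials over K with
u monic, deg v < deg u <= 2 (or (u,v) = (1,0)), and u dividing v^2 - f.\<close>

definition mumford_reduced :: "'a::field_gcd poly \<Rightarrow> 'a poly \<times> 'a poly \<Rightarrow> bool" where
  "mumford_reduced f D \<longleftrightarrow>
     (let u = fst D; v = snd D in
       lead_coeff u = 1 \<and> degree u \<le> 2 \<and> (degree v < degree u \<or> v = 0) \<and>
       u dvd (v^2 - f))"

definition cantor_compose :: "'a::field_gcd poly \<Rightarrow> 'a poly \<times> 'a poly \<Rightarrow> 'a poly \<times> 'a poly
                               \<Rightarrow> 'a poly \<times> 'a poly" where
  "cantor_compose f D1 D2 =
     (let u1 = fst D1; v1 = snd D1; u2 = fst D2; v2 = snd D2;
          d1 = gcd u1 u2; (e1, e2) = bezout_coefficients u1 u2;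
          d = gcd d1 (v1 + v2); (c1, c2) = bezout_coefficients d1 (v1 + v2);
          s1 = c1 * e1; s2 = c1 * e2; s3 = c2;
          u = (u1 * u2) div (d^2);
          v = ((s1 * u1 * v2 + s2 * u2 * v1 + s3 * (v1 * v2 + f)) div d) mod u
      in (u, v))"

definition cantor_reduce_step :: "'a::field_gcd poly \<Rightarrow> 'a poly \<times> 'a poly \<Rightarrow> 'a poly \<times> 'a poly" where
  "cantor_reduce_step f D =
     (let u = fst D; v = snd D in
      if degree u \<le> 2 then D
      else (let u' = (f - v^2) div u; v' = (- v) mod u' in
            (smult (inverse (lead_coeff u')) u', v')))"

text \<open>Cantor addition. Composing two reduced divisors gives deg u <= 4; two reduction
steps always suffice (in fact one does), further steps are the identity.\<close>
definition cantor_add :: "'a::field_gcd poly \<Rightarrow> 'a poly \<times> 'a poly \<Rightarrow> 'a poly \<times> 'a poly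
                            \<Rightarrow> 'a poly \<times> 'a poly" where
  "cantor_add f D1 D2 =
     (let (u, v) = (cantor_reduce_step f ^^ 2) (cantor_compose f D1 D2)
      in (smult (inverse (lead_coeff u)) u, v))"

definition jacobian :: "'a::field_gcd poly \<Rightarrow> ('a poly \<times> 'a poly) monoid" where
  "jacobian f = \<lparr> carrier = {D. mumford_reduced f D}, mult = cantor_add f, one = (1, 0) \<rparr>"

definition two_torsion :: "'a::field_gcd poly \<Rightarrow> ('a poly \<times> 'a poly) monoid" where
  "two_torsion f = (jacobian f)\<lparr> carrier :=
      {D \<in> carrier (jacobian f). D \<otimes>\<^bsub>jacobian f\<^esub> D = \<one>\<^bsub>jacobian f\<^esub>} \<rparr>"

end

theory Submission
  imports Defs "HOL-Number_Theory.Number_Theory"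
begin

hide_const (open) UnivPoly.monom UnivPoly.coeff Module.smult


lemma monic_one_eq: fixes u :: "'a::field_gcd poly"
  assumes "lead_coeff u = 1" "degree u = 0" shows "u = 1"
  using assms by (auto elim!: degree_eq_zeroE)

lemma cantor_sq_zero:
  fixes u f :: "'a::field_gcd poly"
  assumes "lead_coeff u = 1"
  shows "cantor_add f (u,0) (u,0) = (1,0)"
proof -
  have u0: "u \<noteq> 0" using assms by auto
  have nu: "normalize u = u" using assms by (simp add: normalize_poly_eq_map_poly unit_factor_poly_def)
  have g: "gcd u u = u" using nu by simp
  have g2: "gcd u 0 = u" using nu by simp
  have "u * u div u\<^sup>2 = 1" using u0 by (simp add: power2_eq_square)
  then have "cantor_compose f (u,0) (u,0) = (1,0)"
    unfolding cantor_compose_def Let_def using g g2 by (simp add: case_prod_unfold)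
  then show ?thesis unfolding cantor_add_def by (simp add: cantor_reduce_step_def numeral_2_eq_2)
qed

lemma cantor_coprime_small:
  fixes u1 u2 f :: "'a::field_gcd poly"
  assumes "lead_coeff u1 = 1" "lead_coeff u2 = 1" "coprime u1 u2" "u1 * u2 dvd f" "degree (u1*u2) \<le> 2"
  shows "cantor_add f (u1,0) (u2,0) = (u1*u2,0)"
proof -
  have g: "gcd u1 u2 = 1" using assms(3) by simp
  have "cantor_compose f (u1,0) (u2,0) = (u1*u2,0)"
    unfolding cantor_compose_def Let_def using g assms(4) by (simp add: case_prod_unfold)
  moreover have "lead_coeff (u1*u2) = 1" using assms by (simp add: lead_coeff_mult)
  ultimately show ?thesis unfolding cantor_add_def using assms(5) by (simp add: cantor_reduce_step_def numeral_2_eq_2)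
qed

lemma cantor_coprime_big:
  fixes u1 u2 w f :: "'a::field_gcd poly"
  assumes "lead_coeff u1 = 1" "lead_coeff u2 = 1" "coprime u1 u2" "u1 * u2 * w = f" "degree (u1*u2) > 2"
    "lead_coeff w = 1" "degree w \<le> 2"
  shows "cantor_add f (u1,0) (u2,0) = (w,0)"
proof -
  have g: "gcd u1 u2 = 1" using assms(3) by simp
  have "cantor_compose f (u1,0) (u2,0) = (u1*u2,0)"
    unfolding cantor_compose_def Let_def using g assms(4) by (auto simp add: case_prod_unfold)
  moreover have "u1*u2 \<noteq> 0" using assms by auto
  moreover have "f div (u1*u2) = w" using assms(4) \<open>u1*u2 \<noteq> 0\<close> by (metis nonzero_mult_div_cancel_left)
  ultimately show ?thesis unfolding cantor_add_def using assms by (simp add: cantor_reduce_step_def numeral_2_eq_2)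
qed


lemma final_ne_one:
  fixes f U V :: "'a::field_gcd poly"
  assumes "degree f = 5" "degree U = 2 \<or> degree U = 4" "V = 0 \<or> degree V < degree U"
  shows "fst (case (cantor_reduce_step f ^^ 2) (U,V) of (u, v) \<Rightarrow> (smult (inverse (lead_coeff u)) u, v)) \<noteq> 1"
proof (cases "degree U = 2")
  case True
  then have "(cantor_reduce_step f ^^ 2) (U,V) = (U,V)"
    by (simp add: cantor_reduce_step_def numeral_2_eq_2)
  moreover have "U \<noteq> 0" using True by auto
  moreover have "degree (smult (inverse (lead_coeff U)) U) = 2" using True \<open>U \<noteq> 0\<close> by (metis degree_smult_eq inverse_nonzero_iff_nonzero leading_coeff_0_iff)
  ultimately show ?thesis by (metis case_prod_conv degree_1 fst_conv zero_neq_numeral)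
next
  case False
  then have dU: "degree U = 4" using assms by auto
  define F where "F = f - V^2"
  have dV: "degree V \<le> 3" using assms dU by auto
  have dV2: "degree (V^2) = 2 * degree V" by (cases "V = 0") (simp_all add: degree_power_eq)
  have dF1: "5 \<le> degree F" and dF2: "degree F \<le> 6"
  proof -
    show "5 \<le> degree F"
    proof (cases "degree V \<le> 2")
      case True
      then have "degree (V^2) < degree f" using dV2 assms by simp
      then have "degree (f + - (V^2)) = degree f" by (intro degree_add_eq_left) simp
      then have "degree F = 5" unfolding F_def using assms by (simp only: diff_conv_add_uminus)
      then show ?thesis by simp
    next
      case False
      then have "degree f < degree (V^2)" using dV2 assms by simp
      then have "degree (f + - (V^2)) = degree (V^2)" using degree_add_eq_right[of f "-(V^2)"] by simp
      then have "degree F = degree (V^2)" unfolding F_def by (simp only: diff_conv_add_uminus)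
      then show ?thesis using dV2 False by simp
    qed
    have "degree F \<le> max (degree f) (degree (V^2))" unfolding F_def by (rule degree_diff_le_max)
    then show "degree F \<le> 6" using dV assms dV2 by simp
  qed
  define W where "W = F div U"
  have U0: "U \<noteq> 0" using dU by auto
  have FW: "F = W * U + F mod U" unfolding W_def by simp
  have dm: "F mod U = 0 \<or> degree (F mod U) < degree U" using U0 degree_mod_less by blast
  have W0: "W \<noteq> 0"
  proof
    assume "W = 0"
    then have "F = F mod U" using FW by simp
    then have "F mod U \<noteq> 0" using dF1 by auto
    then have "degree F < 4" using dm dU \<open>F = F mod U\<close> by metis
    then show False using dF1 by simp
  qed
  have dWU: "degree (W*U) = degree W + degree U" using W0 U0 by (simp add: degree_mult_eq)
  have "degree F = degree (W*U)"
  proof (cases "F mod U = 0")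
    case True then show ?thesis using FW by simp
  next
    case False
    then have "degree (F mod U) < degree (W*U)" using dm dWU by auto
    then show ?thesis using FW by (metis degree_add_eq_left)
  qed
  then have dW: "1 \<le> degree W" "degree W \<le> 2" using dWU dU dF1 dF2 by auto
  define W' where "W' = smult (inverse (lead_coeff W)) W"
  have dW': "degree W' = degree W" unfolding W'_def using W0 by simp
  have s1: "cantor_reduce_step f (U,V) = (W', (-V) mod W)"
    unfolding cantor_reduce_step_def W'_def W_def F_def using dU by (simp add: Let_def)
  have s2: "cantor_reduce_step f (W', (-V) mod W) = (W', (-V) mod W)"
    unfolding cantor_reduce_step_def using dW dW' by simp
  have W'0: "W' \<noteq> 0" using dW dW' by auto
  have "(cantor_reduce_step f ^^ 2) (U,V) = (W', (-V) mod W)"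
    using s1 s2 by (simp add: numeral_2_eq_2)
  moreover have "degree (smult (inverse (lead_coeff W')) W') = degree W" using W'0 dW' by (metis degree_smult_eq inverse_nonzero_iff_nonzero leading_coeff_0_iff)
  ultimately show ?thesis using dW by (metis case_prod_conv degree_1 fst_conv not_one_le_zero)
qed



lemma double_ne0: fixes v :: "'a::field_gcd poly"
  assumes "(2::'a) \<noteq> 0" "v \<noteq> 0" shows "v + v \<noteq> 0"
proof
  assume "v + v = 0"
  then have "smult 2 v = 0" by (metis mult_2 smult_add_left smult_1_left one_add_one)
  then show False using assms by simp
qed

lemma sq_ne_one:
  fixes f u v :: "'a::field_gcd poly"
  assumes "(2::'a) \<noteq> 0" "degree f = 5" "mumford_reduced f (u,v)" "v \<noteq> 0"
  shows "cantor_add f (u,v) (u,v) \<noteq> (1,0)"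
proof -
  have lu: "lead_coeff u = 1" and du: "degree u \<le> 2" and dv: "degree v < degree u"
    using assms(3,4) unfolding mumford_reduced_def by (auto simp: Let_def)
  have u0: "u \<noteq> 0" using lu by auto
  have nu: "normalize u = u" using lu by (simp add: normalize_poly_eq_map_poly unit_factor_poly_def)
  have g: "gcd u u = u" using nu by simp
  define d where "d = gcd u (v+v)"
  define U where "U = u * u div d^2"
  obtain X where comp: "cantor_compose f (u,v) (u,v) = (U, X mod U)"
    unfolding cantor_compose_def Let_def U_def d_def using g by (simp add: case_prod_unfold)
  have "d dvd u" unfolding d_def by simp
  then obtain k where uk: "u = d * k" by (auto elim: dvdE)
  have d0: "d \<noteq> 0" using u0 uk by auto
  have k0: "k \<noteq> 0" using u0 uk by auto
  have Uk: "U = k * k" unfolding U_def uk using d0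
    by (simp add: power2_eq_square mult.assoc mult.left_commute[of k d])
  have dk: "degree k \<le> degree u" using uk d0 k0 by (simp add: degree_mult_eq)
  have k1: "degree k \<noteq> 0"
  proof
    assume "degree k = 0"
    then obtain c where c: "k = [:c:]" by (auto elim: degree_eq_zeroE)
    then have c0: "c \<noteq> 0" using k0 by auto
    have "d = smult (inverse c) u" using uk c c0 by simp
    then have "u dvd d" by (simp add: dvd_smult)
    moreover have "d dvd v + v" unfolding d_def by simp
    ultimately have "u dvd v + v" by (rule dvd_trans)
    moreover have "v + v \<noteq> 0" using double_ne0 assms by blast
    ultimately have "degree u \<le> degree (v + v)" by (rule dvd_imp_degree_le)
    moreover have "degree (v + v) \<le> degree v" by (rule degree_add_le) auto
    ultimately show False using dv by simp
  qed
  have dUk: "degree U = degree k + degree k" using Uk k0 by (simp add: degree_mult_eq)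
  have "degree k = 1 \<or> degree k = 2" using dk du k1 by linarith
  then have dU: "degree U = 2 \<or> degree U = 4" using dUk by auto
  have U0: "U \<noteq> 0" using Uk k0 by simp
  have "X mod U = 0 \<or> degree (X mod U) < degree U" using degree_mod_less U0 by blast
  then have "fst (case (cantor_reduce_step f ^^ 2) (U, X mod U) of (u, v) \<Rightarrow> (smult (inverse (lead_coeff u)) u, v)) \<noteq> 1"
    by (rule final_ne_one[OF assms(2) dU])
  moreover have "cantor_add f (u,v) (u,v) = (case (cantor_reduce_step f ^^ 2) (U, X mod U) of (u, v) \<Rightarrow> (smult (inverse (lead_coeff u)) u, v))"
    unfolding cantor_add_def comp Let_def by (rule refl)
  ultimately show ?thesis by (metis fst_conv)
qed



lemma monic_dvd_eq: fixes u w :: "'a::field_gcd poly"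
  assumes "lead_coeff u = 1" "lead_coeff w = 1" "u dvd w" "degree u = degree w"
  shows "u = w"
proof -
  obtain c where c: "w = u * c" using assms(3) by (auto elim: dvdE)
  have u0: "u \<noteq> 0" and w0: "w \<noteq> 0" using assms by auto
  then have c0: "c \<noteq> 0" using c by auto
  have "degree c = 0" using c u0 c0 assms(4) by (simp add: degree_mult_eq)
  then obtain c0 where "c = [:c0:]" by (auto elim: degree_eq_zeroE)
  moreover have "lead_coeff c = 1" using c assms by (simp add: lead_coeff_mult)
  ultimately show ?thesis using c by simp
qed

lemma deg1_root: fixes p :: "'a::field poly"
  assumes "degree p = 1" shows "\<exists>x. poly p x = 0"
proof -
  have "p \<noteq> 0" using assms by auto
  then have "coeff p (degree p) \<noteq> 0" by simp
  then have c1: "coeff p 1 \<noteq> 0" using assms by simp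
  have p: "poly p x = coeff p 0 + coeff p 1 * x" for x using assms
    by (simp add: poly_altdef)
  show ?thesis
  proof
    show "poly p (- coeff p 0 / coeff p 1) = 0" using c1 by (simp add: p field_simps)
  qed
qed

lemma deg2_noroot_irred: fixes q :: "'a::field_gcd poly"
  assumes "degree q = 2" "\<And>x. poly q x \<noteq> 0"
  shows "irreducible q"
proof (rule irreducibleI)
  have q0: "q \<noteq> 0" using assms by auto
  then show "q \<noteq> 0" .
  show "\<not> is_unit q" using assms is_unit_iff_degree[OF q0] by auto
  fix a b assume ab: "q = a * b"
  then have a0: "a \<noteq> 0" and b0: "b \<noteq> 0" using q0 by auto
  have "degree a + degree b = 2" using ab a0 b0 assms by (simp add: degree_mult_eq)
  moreover have "degree a \<noteq> 1"
  proof
    assume "degree a = 1"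
    then obtain x where "poly a x = 0" using deg1_root by blast
    then have "poly q x = 0" using ab by simp
    then show False using assms by blast
  qed
  ultimately have "degree a = 0 \<or> degree b = 0" by linarith
  then show "is_unit a \<or> is_unit b" using a0 b0 is_unit_iff_degree by blast
qed

lemma monic_deg0: fixes u :: "'a::field_gcd poly"
  assumes "lead_coeff u = 1" "degree u = 0" shows "u = 1"
  using assms by (auto elim!: degree_eq_zeroE)

locale klein =
  fixes f l q1 q2 :: "'a::field_gcd poly" and \<alpha> :: 'a
  assumes fq: "f = l * q1 * q2"
    and l_def: "l = [:-\<alpha>, 1:]"
    and lq1: "lead_coeff q1 = 1" and lq2: "lead_coeff q2 = 1"
    and dq1: "degree q1 = 2" and dq2: "degree q2 = 2"
    and root: "\<And>\<beta>. poly f \<beta> = 0 \<Longrightarrow> \<beta> = \<alpha>"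
    and q1a: "poly q1 \<alpha> \<noteq> 0" and q2a: "poly q2 \<alpha> \<noteq> 0"
    and q12: "q1 \<noteq> q2"
begin

lemma ll: "lead_coeff l = 1" and dl: "degree l = 1" using l_def by auto

lemma noroot1: "poly q1 x \<noteq> 0"
  using root[of x] q1a fq by (cases "x = \<alpha>") auto
lemma noroot2: "poly q2 x \<noteq> 0"
  using root[of x] q2a fq by (cases "x = \<alpha>") auto

lemma irr1: "prime_elem q1" using deg2_noroot_irred[OF dq1 noroot1] irreducible_imp_prime_elem by blast
lemma irr2: "prime_elem q2" using deg2_noroot_irred[OF dq2 noroot2] irreducible_imp_prime_elem by blast
lemma irrl: "prime_elem l" unfolding l_def by (rule prime_elem_linear_field_poly) simp

lemma cop_l1: "coprime l q1"
  by (rule prime_elem_imp_coprime[OF irrl]) (metis l_def poly_eq_0_iff_dvd q1a)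
lemma cop_l2: "coprime l q2"
  by (rule prime_elem_imp_coprime[OF irrl]) (metis l_def poly_eq_0_iff_dvd q2a)
lemma cop_12: "coprime q1 q2"
  by (rule prime_elem_imp_coprime[OF irr1]) (use monic_dvd_eq[OF lq1 lq2 _] dq1 dq2 q12 in auto)

lemma classify:
  fixes u :: "'a poly"
  assumes lu: "lead_coeff u = 1" and du: "degree u \<le> 2" and uf: "u dvd f"
  shows "u = 1 \<or> u = l \<or> u = q1 \<or> u = q2"
proof (cases "\<exists>\<beta>. poly u \<beta> = 0")
  case True
  then obtain \<beta> where "poly u \<beta> = 0" by blast
  then have "poly f \<beta> = 0" using uf by (auto elim!: dvdE)
  then have "\<beta> = \<alpha>" by (rule root)
  then have "l dvd u" using \<open>poly u \<beta> = 0\<close> l_def poly_eq_0_iff_dvd by metis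
  then obtain u' where u': "u = l * u'" by (auto elim: dvdE)
  have u'0: "u' \<noteq> 0" using u' lu by auto
  have l0: "l \<noteq> 0" using dl by auto
  have lu': "lead_coeff u' = 1" using u' lu ll by (simp add: lead_coeff_mult)
  have "degree u = degree l + degree u'" using u' u'0 l0 degree_mult_eq by blast
  then have du': "degree u' \<le> 1" using du dl by simp
  have "l * u' dvd l * (q1 * q2)" using uf u' fq by (simp add: mult.assoc)
  then have u'q: "u' dvd q1 * q2" using dvd_mult_cancel_left l0 by metis
  have "degree u' \<noteq> 1"
  proof
    assume "degree u' = 1"
    then obtain x where "poly u' x = 0" using deg1_root by blast
    moreover obtain k where "q1 * q2 = u' * k" using u'q by (auto elim: dvdE)
    ultimately have "poly (q1 * q2) x = 0" by (metis mult_zero_left poly_mult)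
    then show False using noroot1 noroot2 by simp
  qed
  then have "u' = 1" using du' lu' monic_deg0 by fastforce
  then show ?thesis using u' by simp
next
  case False
  have "degree u \<noteq> 1" using False deg1_root by blast
  moreover have "degree u = 0 \<Longrightarrow> ?thesis" using monic_deg0 lu by blast
  moreover have "degree u = 2 \<Longrightarrow> ?thesis"
  proof -
    assume d2: "degree u = 2"
    then have pu: "prime_elem u" using deg2_noroot_irred False irreducible_imp_prime_elem by blast
    have "u dvd l * q1 * q2" using uf fq by simp
    then have "u dvd l \<or> u dvd q1 \<or> u dvd q2" using pu prime_elem_dvd_multD by metis
    moreover have "\<not> u dvd l" using dvd_imp_degree_le[of u l] d2 dl l_def by auto
    ultimately show ?thesis using monic_dvd_eq lu lq1 lq2 dq1 dq2 d2 by metis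
  qed
  ultimately show ?thesis using du by linarith
qed

end



context klein begin

lemma l0: "l \<noteq> 0" and q10: "q1 \<noteq> 0" and q20: "q2 \<noteq> 0" using dl dq1 dq2 by auto

lemma degf: "degree f = 5"
  using fq l0 q10 q20 dl dq1 dq2 by (simp add: degree_mult_eq)

lemma mem_ok: assumes "u \<in> {1,l,q1,q2}" shows "lead_coeff u = 1" "degree u \<le> 2" "u dvd f"
  using assms ll lq1 lq2 dl dq1 dq2 fq by (auto simp: mult.assoc mult.left_commute[of q1 l])

lemma carrier_tt:
  assumes two: "(2::'a) \<noteq> 0"
  shows "carrier (two_torsion f) = {(1,0),(l,0),(q1,0),(q2,0)}"
proof -
  have c: "carrier (two_torsion f) = {D. mumford_reduced f D \<and> cantor_add f D D = (1,0)}"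
    by (simp add: two_torsion_def jacobian_def)
  show ?thesis unfolding c
  proof (intro equalityI subsetI)
    fix D assume "D \<in> {D. mumford_reduced f D \<and> cantor_add f D D = (1,0)}"
    then have r: "mumford_reduced f D" and s: "cantor_add f D D = (1,0)" by auto
    obtain u v where D: "D = (u,v)" by force
    have "v = 0" using sq_ne_one[OF two degf] r s D by blast
    then have "lead_coeff u = 1" "degree u \<le> 2" "u dvd f"
      using r D unfolding mumford_reduced_def by (auto simp: Let_def)
    then have "u = 1 \<or> u = l \<or> u = q1 \<or> u = q2" by (rule classify)
    then show "D \<in> {(1,0),(l,0),(q1,0),(q2,0)}" using D \<open>v = 0\<close> by auto
  next
    fix D assume "D \<in> {(1::'a poly,0::'a poly),(l,0),(q1,0),(q2,0)}"
    then obtain u where D: "D = (u,0)" and u: "u \<in> {1,l,q1,q2}" by auto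
    have "mumford_reduced f D" using mem_ok[OF u] D unfolding mumford_reduced_def by (simp add: Let_def)
    moreover have "cantor_add f D D = (1,0)" using D cantor_sq_zero mem_ok(1)[OF u] by blast
    ultimately show "D \<in> {D. mumford_reduced f D \<and> cantor_add f D D = (1,0)}" by simp
  qed
qed

lemma dlq1: "degree (l*q1) = 3" using l0 q10 dl dq1 by (simp add: degree_mult_eq)
lemma dlq2: "degree (l*q2) = 3" using l0 q20 dl dq2 by (simp add: degree_mult_eq)
lemma dq1q2: "degree (q1*q2) = 4" using q10 q20 dq1 dq2 by (simp add: degree_mult_eq)

lemma table:
  "cantor_add f (1,0) (1,0) = (1,0)"
  "cantor_add f (1,0) (l,0) = (l,0)"
  "cantor_add f (1,0) (q1,0) = (q1,0)"
  "cantor_add f (1,0) (q2,0) = (q2,0)"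
  "cantor_add f (l,0) (1,0) = (l,0)"
  "cantor_add f (q1,0) (1,0) = (q1,0)"
  "cantor_add f (q2,0) (1,0) = (q2,0)"
  "cantor_add f (l,0) (l,0) = (1,0)"
  "cantor_add f (q1,0) (q1,0) = (1,0)"
  "cantor_add f (q2,0) (q2,0) = (1,0)"
  "cantor_add f (l,0) (q1,0) = (q2,0)"
  "cantor_add f (q1,0) (l,0) = (q2,0)"
  "cantor_add f (l,0) (q2,0) = (q1,0)"
  "cantor_add f (q2,0) (l,0) = (q1,0)"
  "cantor_add f (q1,0) (q2,0) = (l,0)"
  "cantor_add f (q2,0) (q1,0) = (l,0)"
proof -
  have sm: "cantor_add f (1,0) (u,0) = (u,0)" "cantor_add f (u,0) (1,0) = (u,0)" if "u \<in> {1,l,q1,q2}" for u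
    using cantor_coprime_small[of 1 u f] cantor_coprime_small[of u 1 f] mem_ok[OF that] by auto
  show "cantor_add f (1,0) (1,0) = (1,0)" "cantor_add f (1,0) (l,0) = (l,0)"
  "cantor_add f (1,0) (q1,0) = (q1,0)"
  "cantor_add f (1,0) (q2,0) = (q2,0)"
  "cantor_add f (l,0) (1,0) = (l,0)"
  "cantor_add f (q1,0) (1,0) = (q1,0)"
  "cantor_add f (q2,0) (1,0) = (q2,0)" using sm by auto
  show "cantor_add f (l,0) (l,0) = (1,0)"
  "cantor_add f (q1,0) (q1,0) = (1,0)"
  "cantor_add f (q2,0) (q2,0) = (1,0)" using cantor_sq_zero ll lq1 lq2 by auto
  show "cantor_add f (l,0) (q1,0) = (q2,0)"
    by (rule cantor_coprime_big) (use ll lq1 lq2 cop_l1 fq dlq1 dq2 in auto)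
  show "cantor_add f (q1,0) (l,0) = (q2,0)"
    by (rule cantor_coprime_big) (use ll lq1 lq2 cop_l1 fq dlq1 dq2 in \<open>auto simp: ac_simps coprime_commute\<close>)
  show "cantor_add f (l,0) (q2,0) = (q1,0)"
    by (rule cantor_coprime_big) (use ll lq1 lq2 cop_l2 fq dlq2 dq1 in \<open>auto simp: ac_simps\<close>)
  show "cantor_add f (q2,0) (l,0) = (q1,0)"
    by (rule cantor_coprime_big) (use ll lq1 lq2 cop_l2 fq dlq2 dq1 in \<open>auto simp: ac_simps coprime_commute\<close>)
  show "cantor_add f (q1,0) (q2,0) = (l,0)"
    by (rule cantor_coprime_big) (use ll lq1 lq2 cop_12 fq dq1q2 dl in \<open>auto simp: ac_simps\<close>)
  show "cantor_add f (q2,0) (q1,0) = (l,0)"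
    by (rule cantor_coprime_big) (use ll lq1 lq2 cop_12 fq dq1q2 dl in \<open>auto simp: ac_simps coprime_commute\<close>)
qed

lemma distinct: "1 \<noteq> l" "1 \<noteq> q1" "1 \<noteq> q2" "l \<noteq> q1" "l \<noteq> q2" "q1 \<noteq> q2"
  using dl dq1 dq2 q12 by auto

lemma iso_klein:
  assumes two: "(2::'a) \<noteq> 0"
  shows "two_torsion f \<cong> DirProd (integer_mod_group 2) (integer_mod_group 2)"
proof -
  define \<psi> :: "'a poly \<times> 'a poly \<Rightarrow> int \<times> int" where
    "\<psi> D = (if fst D = l \<or> fst D = q2 then 1 else 0, if fst D = q1 \<or> fst D = q2 then 1 else 0)" for D
  have m: "mult (two_torsion f) = cantor_add f" by (simp add: two_torsion_def jacobian_def)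
  have cZ: "carrier (DirProd (integer_mod_group 2) (integer_mod_group 2)) = {0..<2} \<times> {0..<2}"
    by (simp add: carrier_integer_mod_group)
  have "\<psi> \<in> hom (two_torsion f) (DirProd (integer_mod_group 2) (integer_mod_group 2))"
  proof (rule homI)
    fix x assume "x \<in> carrier (two_torsion f)"
    then show "\<psi> x \<in> carrier (DirProd (integer_mod_group 2) (integer_mod_group 2))"
      unfolding cZ \<psi>_def by auto
  next
    fix x y assume "x \<in> carrier (two_torsion f)" "y \<in> carrier (two_torsion f)"
    then show "\<psi> (x \<otimes>\<^bsub>two_torsion f\<^esub> y) = \<psi> x \<otimes>\<^bsub>DirProd (integer_mod_group 2) (integer_mod_group 2)\<^esub> \<psi> y"
      unfolding carrier_tt[OF two] m \<psi>_def using table distinct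
      by (auto simp: mult_DirProd)
  qed
  moreover have "bij_betw \<psi> (carrier (two_torsion f)) (carrier (DirProd (integer_mod_group 2) (integer_mod_group 2)))"
    unfolding carrier_tt[OF two] cZ bij_betw_def inj_on_def \<psi>_def using distinct
    by (auto simp: image_def)
  ultimately show ?thesis unfolding is_iso_def iso_def by blast
qed

end



lemma poly_prod_aux: fixes a \<alpha> :: "'a::field_gcd" assumes a2: "a^2 = a + 1"
  shows "[:\<alpha>^2, a*\<alpha>, 1:] * [:\<alpha>^2, (1-a)*\<alpha>, 1:] = [:\<alpha>^4, \<alpha>^3, \<alpha>^2, \<alpha>, 1:]"
proof -
  have "\<alpha> * (\<alpha> * a) + \<alpha>\<^sup>2 = \<alpha> * (\<alpha> * (a * a))" using a2 by (simp add: power2_eq_square algebra_simps)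
  moreover have "\<alpha> * \<alpha>^2 = \<alpha>^3" by (simp add: power2_eq_square power3_eq_cube)
  ultimately show ?thesis by (simp add: algebra_simps)
qed

lemma poly_prod_aux2: fixes \<alpha> h :: "'a::field_gcd" assumes "\<alpha>^5 = -h"
  shows "[:-\<alpha>,1:] * [:\<alpha>^4, \<alpha>^3, \<alpha>^2, \<alpha>, 1:] = monom 1 5 + [:h:]"
  using assms by (simp add: monom_Suc numeral_eq_Suc algebra_simps)

lemma pow_iter: fixes x :: "'a::comm_ring_1"
  assumes "x ^ Suc q = x" shows "x ^ (j * q + 1) = x"
proof (induction j)
  case 0 then show ?case by simp
next
  case (Suc j)
  have e: "Suc j * q + 1 = (j * q + 1) + q" by simp
  have "x ^ (Suc j * q + 1) = x ^ (j * q + 1) * x ^ q"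
    unfolding e by (rule power_add)
  also have "\<dots> = x ^ Suc q" using Suc by simp
  finally show ?case using assms by simp
qed

theorem corollary6:
  fixes n :: nat and h :: "'a::{field_gcd,finite}"
  assumes "n > 0"
    and "prime (4 * 5 ^ n - 1 :: nat)"
    and "card (UNIV :: 'a set) = 4 * 5 ^ n - 1"
    and "h \<noteq> 0"
  shows "two_torsion (monom 1 5 + [:h:]) \<cong>
           DirProd (integer_mod_group 2) (integer_mod_group 2)"
proof -
  define p where "p = (4 * 5 ^ n - 1 :: nat)"
  define t where "t = (5::nat) ^ (n - 1)"
  have t1: "t \<ge> 1" unfolding t_def by simp
  obtain m where nm: "n = Suc m" using assms(1) gr0_implies_Suc by blast
  have p20: "p = 20 * t - 1" unfolding p_def t_def nm by simp
  have pp: "prime p" using assms(2) p_def by simp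
  have p19: "p \<ge> 19" using p20 t1 by simp
  have "p = 5 * (4 * t - 1) + 4" using p20 t1 by linarith
  then have pmod: "p mod 5 = 4" by simp
  have cardp: "card (UNIV::'a set) = p" using assms(3) p_def by simp
  have CH: "CHAR('a) = p"
  proof -
    have "CHAR('a) dvd p" using CHAR_dvd_CARD[where 'a='a] cardp by simp
    then have "CHAR('a) = 1 \<or> CHAR('a) = p" using pp prime_nat_iff by blast
    moreover have "CHAR('a) \<noteq> 1" using of_nat_CHAR[where 'a='a] by (metis of_nat_1 one_neq_zero)
    ultimately show ?thesis by blast
  qed
  have ofnat0: "of_nat m = (0::'a) \<longleftrightarrow> p dvd m" for m
    using of_nat_eq_0_iff_char_dvd[where 'a='a] CH by simp
  have two: "(2::'a) \<noteq> 0"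
  proof
    assume "(2::'a) = 0"
    then have "of_nat 2 = (0::'a)" by simp
    then have "p dvd 2" using ofnat0 by blast
    then show False using p19 by (auto dest: dvd_imp_le)
  qed
  have five: "(5::'a) \<noteq> 0"
  proof
    assume "(5::'a) = 0"
    then have "of_nat 5 = (0::'a)" by simp
    then have "p dvd 5" using ofnat0 by blast
    then show False using p19 by (auto dest: dvd_imp_le)
  qed
  have four: "(4::'a) \<noteq> 0" using two by (metis mult_2 numeral_Bit0 mult_eq_0_iff numeral_times_numeral semiring_norm(12))
  have surj: "\<exists>m. x = (of_nat m :: 'a)" for x
  proof -
    have inj: "inj_on (of_nat :: nat \<Rightarrow> 'a) {..<p}"
    proof (rule inj_onI)
      fix x y assume "x \<in> {..<p}" "y \<in> {..<p}" "(of_nat x :: 'a) = of_nat y"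
      then show "x = y" using of_nat_eq_iff_cong_CHAR[where 'a='a] CH cong_less_modulus_unique_nat by auto
    qed
    have "card ((of_nat :: nat \<Rightarrow> 'a) ` {..<p}) = card (UNIV::'a set)" using card_image[OF inj] cardp by simp
    then have "(of_nat :: nat \<Rightarrow> 'a) ` {..<p} = UNIV" by (simp add: card_eq_UNIV_imp_eq_UNIV)
    then show ?thesis by (metis UNIV_I imageE)
  qed
  have frob: "x ^ p = x" for x :: 'a
  proof -
    obtain m where m: "x = of_nat m" using surj by blast
    have "[m ^ p = m] (mod p)"
    proof (cases "p dvd m")
      case True
      have mp: "m ^ p = m * m ^ (p - 1)" using p19 by (metis Suc_diff_1 less_le_trans power_Suc zero_less_numeral)
      have "p dvd m ^ p" unfolding mp using True by (rule dvd_mult2)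
      then show ?thesis using True unfolding cong_def by simp
    next
      case False
      then have "[m ^ (p - 1) = 1] (mod p)" using fermat_theorem pp by blast
      then have "[m * m ^ (p - 1) = m * 1] (mod p)" by (rule cong_scalar_left)
      moreover have "m * m ^ (p - 1) = m ^ p" using p19 by (metis Suc_diff_1 less_le_trans power_Suc zero_less_numeral)
      ultimately show ?thesis by simp
    qed
    then have "of_nat (m ^ p) = (of_nat m :: 'a)" unfolding of_nat_eq_iff_cong_CHAR[where 'a='a] CH .
    then show ?thesis using m by simp
  qed
  define k where "k = 12 * t - 1"
  have k5: "5 * k = 3 * (p - 1) + 1" unfolding k_def using p20 t1 by simp
  have root5: "(x ^ 5) ^ k = x" "(x ^ k) ^ 5 = x" for x :: 'a
  proof -
    have "x ^ Suc (p - 1) = x" using frob p19 by (simp add: Suc_diff_1)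
    then have "x ^ (5 * k) = x" unfolding k5 by (rule pow_iter)
    then show "(x ^ 5) ^ k = x" "(x ^ k) ^ 5 = x" by (simp_all add: power_mult[symmetric] mult.commute)
  qed
  define \<alpha> where "\<alpha> = (-h) ^ k"
  have a5: "\<alpha> ^ 5 = -h" unfolding \<alpha>_def by (rule root5(2))
  have a0: "\<alpha> \<noteq> 0" using a5 assms(4) by auto
  have L1: "Legendre (int p) 5 = 1"
  proof -
    have "int p mod 5 = 4" using pmod by (metis of_nat_mod of_nat_numeral)
    then have c1: "\<not> [int p = 0] (mod 5)" and c2: "[2^2 = int p] (mod 5)" by (simp_all add: cong_def)
    have "QuadRes 5 (int p)" unfolding QuadRes_def using c2 by blast
    then show ?thesis unfolding Legendre_def using c1 by simp
  qed
  have "Legendre (int p) (int 5) * Legendre (int 5) (int p) = (-1::int) ^ ((p - 1) div 2 * ((5 - 1) div 2))"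
    by (rule Quadratic_Reciprocity) (use pp p19 in auto)
  moreover have "even ((p - 1) div 2 * ((5 - 1) div 2))" by simp
  ultimately have "Legendre 5 (int p) = 1" using L1 by (simp only: neg_one_even_power) simp
  then have "QuadRes (int p) 5" unfolding Legendre_def by (auto split: if_splits)
  then obtain y where y: "[y^2 = 5] (mod int p)" unfolding QuadRes_def by blast
  define s where "s = (of_int y :: 'a)"
  have s2: "s^2 = 5"
  proof -
    have "of_int (y^2) = (of_int 5 :: 'a)" using y unfolding of_int_eq_iff_cong_CHAR[where 'a='a] CH .
    then show ?thesis unfolding s_def by simp
  qed
  define a where "a = (1 + s) / 2"
  have a2: "a^2 = a + 1"
  proof -
    have "(2*a)^2 = 1 + 2*s + s^2" unfolding a_def using two by (simp add: power2_eq_square algebra_simps)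
    then have "4 * a^2 = 6 + 2 * s" using s2 by (simp add: power_mult_distrib)
    also have "\<dots> = 4 * (a + 1)" unfolding a_def using two by (simp add: field_simps)
    finally have "4 * a^2 = 4 * (a + 1)" .
    then show ?thesis using four mult_left_cancel by blast
  qed
  define l where "l = [:-\<alpha>, 1:]"
  define q1 where "q1 = [:\<alpha>^2, a*\<alpha>, 1:]"
  define q2 where "q2 = [:\<alpha>^2, (1-a)*\<alpha>, 1:]"
  define f where "f = monom (1::'a) 5 + [:h:]"
  have fq: "f = l * q1 * q2"
    unfolding f_def l_def q1_def q2_def mult.assoc poly_prod_aux[OF a2] using poly_prod_aux2[OF a5] by simp
  have pf: "poly f x = x^5 + h" for x unfolding f_def by (simp add: poly_monom)
  have root: "\<beta> = \<alpha>" if "poly f \<beta> = 0" for \<beta>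
  proof -
    have "\<beta>^5 + h = 0" using that pf by simp
    then have "\<beta>^5 = -h" by (simp add: eq_neg_iff_add_eq_0)
    then have "\<beta>^5 = \<alpha>^5" using a5 by simp
    then have "(\<beta>^5)^k = (\<alpha>^5)^k" by (rule arg_cong)
    then show ?thesis unfolding root5(1) .
  qed
  have q1a: "poly q1 \<alpha> \<noteq> 0"
  proof
    assume "poly q1 \<alpha> = 0"
    then have "\<alpha>^2 * (2 + a) = 0" unfolding q1_def by (simp add: algebra_simps power2_eq_square)
    then have "2 + a = 0" using a0 by simp
    then have "a = -2" by (simp add: eq_neg_iff_add_eq_0 add.commute)
    then have "(4::'a) = -1" using a2 by (simp add: power2_eq_square)
    then have "(5::'a) = 0" by (simp add: eq_neg_iff_add_eq_0)
    then show False using five by simp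
  qed
  have q2a: "poly q2 \<alpha> \<noteq> 0"
  proof
    assume "poly q2 \<alpha> = 0"
    then have "\<alpha>^2 * (3 - a) = 0" unfolding q2_def by (simp add: algebra_simps power2_eq_square)
    then have "3 - a = 0" using a0 by simp
    then have "a = 3" by simp
    then have "(9::'a) = 4" using a2 by (simp add: power2_eq_square)
    then have "(5::'a) + 4 = 0 + 4" by simp
    then have "(5::'a) = 0" by (rule add_right_imp_eq)
    then show False using five by simp
  qed
  have q12: "q1 \<noteq> q2"
  proof
    assume "q1 = q2"
    then have "a * \<alpha> = (1 - a) * \<alpha>" unfolding q1_def q2_def by simp
    then have "a = 1 - a" using a0 by simp
    then have "s = 0" unfolding a_def using two by (simp add: field_simps)
    then show False using s2 five by simp
  qed
  interpret klein f l q1 q2 \<alpha>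
  proof (unfold_locales)
    show "f = l * q1 * q2" by (rule fq)
    show "l = [:-\<alpha>, 1:]" by (rule l_def)
    show "lead_coeff q1 = 1" "lead_coeff q2 = 1" "degree q1 = 2" "degree q2 = 2"
      unfolding q1_def q2_def by simp_all
    show "\<beta> = \<alpha>" if "poly f \<beta> = 0" for \<beta> using that by (rule root)
    show "poly q1 \<alpha> \<noteq> 0" by (rule q1a)
    show "poly q2 \<alpha> \<noteq> 0" by (rule q2a)
    show "q1 \<noteq> q2" by (rule q12)
  qed
  show ?thesis using iso_klein[OF two] unfolding f_def .
qed

end
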